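(* If $n$ is a non-negative integer, then $$\sum_{k = 1}^n \sum_{j = 0}^{k - 1} \frac{2^{2j}}{k - j} \binom{2(n - j)}{n - j} = 2^{2n + 1} + \left(H_n - 2\right)(2n + 1)\binom{2n}{n}$$ and $$\sum_{k = 1}^n \sum_{j = 0}^{k - 1} \frac{2^{2j}}{2k - 2j - 1} \binom{2(n - j)}{n - j} = \left(O_{n + 1} - 1 \right)(2n + 1)\binom{2n}{n}.$$
   Context: $H_n=\sum_{m=1}^n\frac1m$ and $O_n=\sum_{m=1}^n\frac1{2m-1}$. Empty sums are zero. *)

theory Defs
  imports Complex_Main
begin

definition H :: "nat \<Rightarrow> real" where
  "H n = (\<Sum>m=1..n. 1 / real m)"

definition Odd_harm :: "nat \<Rightarrow> real" where
  "Odd_harm n = (\<Sum>m=1..n. 1 / (2 * real m - 1))"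

end

theory Submission
  imports Defs
begin

lemma swap_lemma:
  fixes w :: "nat \<Rightarrow> real" and c :: "nat \<Rightarrow> real"
  shows "(\<Sum>k=1..n. \<Sum>j=0..k-1. 2 ^ (2*j) * w (k-j) * c (n-j))
       = (\<Sum>j<n. 4 ^ j * (\<Sum>m=1..n-j. w m) * c (n-j))"
proof -
  have "(\<Sum>k=1..n. \<Sum>j=0..k-1. 2 ^ (2*j) * w (k-j) * c (n-j))
      = (\<Sum>k=0..n. \<Sum>j=0..<k. 2 ^ (2*j) * w (k-j) * c (n-j))"
  proof -
    have "(\<Sum>k=0..n. \<Sum>j=0..<k. 2 ^ (2*j) * w (k-j) * c (n-j))
       = (\<Sum>k=1..n. \<Sum>j=0..<k. 2 ^ (2*j) * w (k-j) * c (n-j))"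
      by (simp add: sum.atLeast_Suc_atMost)
    also have "\<dots> = (\<Sum>k=1..n. \<Sum>j=0..k-1. 2 ^ (2*j) * w (k-j) * c (n-j))"
      by (intro sum.cong refl) (auto simp: atLeastLessThanSuc_atLeastAtMost[symmetric])
    finally show ?thesis by simp
  qed
  also have "\<dots> = (\<Sum>j=0..<n. \<Sum>k=Suc j..n. 2 ^ (2*j) * w (k-j) * c (n-j))"
    by (rule sum.nested_swap)
  also have "\<dots> = (\<Sum>j<n. \<Sum>k=Suc j..n. 2 ^ (2*j) * w (k-j) * c (n-j))"
    by (simp add: atLeast0LessThan)
  also have "\<dots> = (\<Sum>j<n. 4 ^ j * (\<Sum>m=1..n-j. w m) * c (n-j))"
  proof (rule sum.cong[OF refl])
    fix j assume "j \<in> {..<n}"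
    hence jn: "j < n" by simp
    have "(\<Sum>m=1..n-j. w m) = (\<Sum>m=1+j..(n-j)+j. w (m - j))"
      by (subst sum.shift_bounds_cl_nat_ivl) simp
    also have "\<dots> = (\<Sum>k=Suc j..n. w (k-j))" using jn by simp
    finally have e: "(\<Sum>m=1..n-j. w m) = (\<Sum>k=Suc j..n. w (k-j))" .
    have p: "(2::real) ^ (2*j) = 4 ^ j" by (simp add: power_mult)
    show "(\<Sum>k=Suc j..n. 2 ^ (2*j) * w (k-j) * c (n-j)) = 4 ^ j * (\<Sum>m=1..n-j. w m) * c (n-j)"
      unfolding e p by (simp add: sum_distrib_left sum_distrib_right mult.assoc)
  qed
  finally show ?thesis .
qed

lemma rec_sum:
  fixes a :: "nat \<Rightarrow> real"
  shows "(\<Sum>j<Suc n. 4 ^ j * a (Suc n - j)) = a (Suc n) + 4 * (\<Sum>j<n. 4 ^ j * a (n - j))"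
  unfolding sum.lessThan_Suc_shift by (simp add: sum_distrib_left mult.assoc)

lemma cat_rec: "real ((2*Suc n) choose Suc n) * real (Suc n) = 2 * (2 * real n + 1) * real ((2*n) choose n)"
proof -
  define A where "A = real ((2*Suc n) choose Suc n)"
  define B where "B = real ((2*n) choose n)"
  define f where "f = (fact n :: real)"
  define F where "F = (fact (2*n) :: real)"
  have a0: "fact (Suc n) * fact (2*Suc n - Suc n) * ((2*Suc n) choose Suc n) = fact (2*Suc n)"
    by (rule binomial_fact_lemma) simp
  have a: "(real n + 1) * f * ((real n + 1) * f) * A = (2*real n+2)*(2*real n+1) * F"
  proof -
    have "real (fact (Suc n) * fact (2*Suc n - Suc n) * ((2*Suc n) choose Suc n)) = real (fact (2*Suc n))"
      using a0 by simp
    moreover have "2*Suc n - Suc n = Suc n" by simp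
    moreover have "2 * Suc n = Suc (Suc (2*n))" by simp
    ultimately show ?thesis unfolding A_def f_def F_def
      by (simp only: of_nat_mult of_nat_fact fact_Suc of_nat_Suc) (simp add: algebra_simps)
  qed
  have b0: "fact n * fact (2*n - n) * ((2*n) choose n) = fact (2*n)"
    by (rule binomial_fact_lemma) simp
  have b: "f * f * B = F"
  proof -
    have "real (fact n * fact (2*n - n) * ((2*n) choose n)) = real (fact (2*n))"
      using b0 by simp
    thus ?thesis unfolding B_def f_def F_def by (simp add: of_nat_fact)
  qed
  have nz: "f * f * (real n + 1) \<noteq> 0" unfolding f_def by simp
  have "f * f * (real n + 1) * (A * (real n + 1)) = f * f * (real n + 1) * (2 * (2 * real n + 1) * B)"
  proof -
    have "f * f * (real n + 1) * (A * (real n + 1)) = (real n + 1) * f * ((real n + 1) * f) * A"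
      by (simp add: algebra_simps)
    also have "\<dots> = (2*real n+2)*(2*real n+1) * F" by (rule a)
    also have "\<dots> = (2*real n+2)*(2*real n+1) * (f * f * B)" by (simp add: b)
    also have "\<dots> = f * f * (real n + 1) * (2 * (2 * real n + 1) * B)" by (simp add: algebra_simps)
    finally show ?thesis .
  qed
  hence "A * (real n + 1) = 2 * (2 * real n + 1) * B" using nz by simp
  thus ?thesis unfolding A_def B_def by (simp add: add.commute)
qed

lemma alg1:
  fixes x h p A B :: real
  assumes "4*(2*x+1)*B = 2*(1+x)*A" "x \<ge> 0"
  shows "(h + 1/(1+x)) * A + 4*(p + (h-2)*(2*x+1)*B) = 4*p + (h + 1/(1+x) - 2)*(2*(1+x)+1)*A"
proof -
  have "4*((h-2)*(2*x+1)*B) = (h-2)*(4*(2*x+1)*B)" by (simp add: algebra_simps)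
  also have "\<dots> = (h-2)*(2*(1+x)*A)" using assms(1) by simp
  finally have e: "4*((h-2)*(2*x+1)*B) = (h-2)*(2*(1+x)*A)" .
  have "(h + 1/(1+x)) * A + 4*(p + (h-2)*(2*x+1)*B) = (h + 1/(1+x)) * A + 4*p + (h-2)*(2*(1+x)*A)"
    using e by (simp add: algebra_simps)
  also have "\<dots> = 4*p + (h + 1/(1+x) - 2)*(2*(1+x)+1)*A"
    using assms(2) by (simp add: field_simps)
  finally show ?thesis .
qed

lemma alg2:
  fixes x h A B :: real
  assumes "4*(2*x+1)*B = 2*(1+x)*A" "x \<ge> 0"
  shows "h * A + 4*((h - 1)*(2*x+1)*B) = (h + 1/(2*(1+x)+1) - 1)*(2*(1+x)+1)*A"
proof -
  have "4*((h-1)*(2*x+1)*B) = (h-1)*(4*(2*x+1)*B)" by (simp add: algebra_simps)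
  also have "\<dots> = (h-1)*(2*(1+x)*A)" using assms(1) by simp
  finally have e: "4*((h-1)*(2*x+1)*B) = (h-1)*(2*(1+x)*A)" .
  have "h * A + 4*((h - 1)*(2*x+1)*B) = h * A + (h-1)*(2*(1+x)*A)"
    using e by simp
  also have "\<dots> = (h + 1/(2*(1+x)+1) - 1)*(2*(1+x)+1)*A"
    using assms(2) by (simp add: field_simps)
  finally show ?thesis .
qed

lemma part1: "(\<Sum>j<n. 4 ^ j * (H (n-j) * real ((2*(n-j)) choose (n-j))))
   = 2 ^ (2*n+1) + (H n - 2) * (2 * real n + 1) * real ((2*n) choose n)"
proof (induction n)
  case 0 show ?case by (simp add: H_def)
next
  case (Suc n)
  have Hs: "H (Suc n) = H n + 1 / real (Suc n)" by (simp add: H_def)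
  have "(\<Sum>j<Suc n. 4 ^ j * (H (Suc n-j) * real ((2*(Suc n-j)) choose (Suc n-j))))
      = H (Suc n) * real ((2*Suc n) choose Suc n) + 4 * (2 ^ (2*n+1) + (H n - 2) * (2 * real n + 1) * real ((2*n) choose n))"
    using rec_sum[of "\<lambda>m. H m * real ((2*m) choose m)" n] Suc.IH by simp
  also have "\<dots> = 2 ^ (2*Suc n+1) + (H (Suc n) - 2) * (2 * real (Suc n) + 1) * real ((2*Suc n) choose Suc n)"
  proof -
    have cr: "4 * (2 * real n + 1) * real ((2*n) choose n) = 2 * real (Suc n) * real ((2*Suc n) choose Suc n)"
      using cat_rec[of n] by (simp add: algebra_simps)
    have p: "(2::real) ^ (2*Suc n+1) = 4 * 2 ^ (2*n+1)" by simp
    show ?thesis unfolding Hs p of_nat_Suc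
      by (rule alg1) (use cr in \<open>simp_all add: algebra_simps\<close>)
  qed
  finally show ?case .
qed

lemma part2: "(\<Sum>j<n. 4 ^ j * (Odd_harm (n-j) * real ((2*(n-j)) choose (n-j))))
   = (Odd_harm (n+1) - 1) * (2 * real n + 1) * real ((2*n) choose n)"
proof (induction n)
  case 0 show ?case by (simp add: Odd_harm_def)
next
  case (Suc n)
  have Os: "Odd_harm (Suc (Suc n)) = Odd_harm (Suc n) + 1 / (2 * real (Suc n) + 1)"
    by (simp add: Odd_harm_def)
  have "(\<Sum>j<Suc n. 4 ^ j * (Odd_harm (Suc n-j) * real ((2*(Suc n-j)) choose (Suc n-j))))
      = Odd_harm (Suc n) * real ((2*Suc n) choose Suc n) + 4 * ((Odd_harm (n+1) - 1) * (2 * real n + 1) * real ((2*n) choose n))"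
    using rec_sum[of "\<lambda>m. Odd_harm m * real ((2*m) choose m)" n] Suc.IH by simp
  also have "\<dots> = (Odd_harm (Suc n+1) - 1) * (2 * real (Suc n) + 1) * real ((2*Suc n) choose Suc n)"
  proof -
    have cr: "4 * (2 * real n + 1) * real ((2*n) choose n) = 2 * real (Suc n) * real ((2*Suc n) choose Suc n)"
      using cat_rec[of n] by (simp add: algebra_simps)
    show ?thesis unfolding Os Suc_eq_plus1[symmetric] of_nat_Suc
      by (rule alg2) (use cr in \<open>simp_all add: algebra_simps\<close>)
  qed
  finally show ?case .
qed

theorem proposition19:
  fixes n :: nat
  shows "((\<Sum>k=1..n. \<Sum>j=0..k-1. 2 ^ (2*j) / real (k - j) * real ((2*(n-j)) choose (n-j)))
           = 2 ^ (2*n+1) + (H n - 2) * (2 * real n + 1) * real ((2*n) choose n)) \<and>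
         ((\<Sum>k=1..n. \<Sum>j=0..k-1. 2 ^ (2*j) / (2 * real k - 2 * real j - 1) * real ((2*(n-j)) choose (n-j)))
           = (Odd_harm (n+1) - 1) * (2 * real n + 1) * real ((2*n) choose n))"
proof
  let ?c = "\<lambda>m. real ((2*m) choose m)"
  have "(\<Sum>k=1..n. \<Sum>j=0..k-1. 2 ^ (2*j) / real (k - j) * ?c (n-j))
      = (\<Sum>k=1..n. \<Sum>j=0..k-1. 2 ^ (2*j) * (\<lambda>m. 1 / real m) (k-j) * ?c (n-j))"
    by simp
  also have "\<dots> = (\<Sum>j<n. 4 ^ j * (\<Sum>m=1..n-j. 1 / real m) * ?c (n-j))"
    by (rule swap_lemma)
  also have "\<dots> = (\<Sum>j<n. 4 ^ j * (H (n-j) * ?c (n-j)))"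
    by (simp add: H_def mult.assoc)
  finally show "(\<Sum>k=1..n. \<Sum>j=0..k-1. 2 ^ (2*j) / real (k - j) * ?c (n-j))
           = 2 ^ (2*n+1) + (H n - 2) * (2 * real n + 1) * ?c n"
    using part1 by simp
next
  let ?c = "\<lambda>m. real ((2*m) choose m)"
  have "(\<Sum>k=1..n. \<Sum>j=0..k-1. 2 ^ (2*j) / (2 * real k - 2 * real j - 1) * ?c (n-j))
      = (\<Sum>k=1..n. \<Sum>j=0..k-1. 2 ^ (2*j) * (\<lambda>m. 1 / (2 * real m - 1)) (k-j) * ?c (n-j))"
    by (intro sum.cong refl) (auto simp: of_nat_diff)
  also have "\<dots> = (\<Sum>j<n. 4 ^ j * (\<Sum>m=1..n-j. 1 / (2 * real m - 1)) * ?c (n-j))"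
    by (rule swap_lemma)
  also have "\<dots> = (\<Sum>j<n. 4 ^ j * (Odd_harm (n-j) * ?c (n-j)))"
    by (simp add: Odd_harm_def mult.assoc)
  finally show "(\<Sum>k=1..n. \<Sum>j=0..k-1. 2 ^ (2*j) / (2 * real k - 2 * real j - 1) * ?c (n-j))
           = (Odd_harm (n+1) - 1) * (2 * real n + 1) * ?c n"
    using part2 by simp
qed

end
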